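(* Let $0 \neq q \in \mathbb{C}$ with $q^{2} \neq 1$, and let $a, b, c$ be elements of an associative algebra over $\mathbb{C}$ satisfying $$ab = q\, ba + c, \qquad ac = q^{2} ca, \qquad cb = q^{2} bc.$$ Then for every $n \in \mathbb{N}$, $$(a + b)^{n} = \sum_{\substack{\alpha,\beta,\gamma \in \mathbb{Z}_{+}\\ \alpha + 2\beta + \gamma = n}} \frac{ [n]_{q}! }{ [\alpha]_{q}!\, [\gamma]_{q}!\, [2]_{q} [4]_{q} \cdots [2\beta]_{q} }\; b^{\alpha}c^{\beta} a^{\gamma},$$ where the product $[2]_{q}[4]_{q}\cdots[2\beta]_{q}$ is interpreted as $1$ when $\beta = 0$.
   Context: $\mathbb{N} = \{1,2,3,\ldots\}$ and $\mathbb{Z}_{+} = \mathbb{N}\cup\{0\}$. For $0 \neq q \in \mathbb{C}$ with $q^2 \neq 1$ and $n \in \mathbb{Z}_{+}$: $[n]_{q} = \frac{1-q^{n}}{1-q}$, $[n]_{q}! = [n]_{q}[n-1]_{q}\cdots[1]_{q}$, and $[0]_{q}! = 1$.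
   Formalization: The q-numbers $[k]_{q}$ for 1 <= k <= n are also assumed nonzero, so every denominator in the formula for $(a + b)^{n}$ is nonzero. The statement above fails without it. *)

theory Defs
  imports Complex_Main
begin

class scaleC =
  fixes scaleC :: "complex \<Rightarrow> 'a \<Rightarrow> 'a" (infixr "*\<^sub>C" 75)

class complex_algebra_1 = ring_1 + scaleC +
  assumes scaleC_add_right: "r *\<^sub>C (x + y) = r *\<^sub>C x + r *\<^sub>C y"
    and scaleC_add_left: "(r + s) *\<^sub>C x = r *\<^sub>C x + s *\<^sub>C x"
    and scaleC_scaleC: "r *\<^sub>C (s *\<^sub>C x) = (r * s) *\<^sub>C x"
    and scaleC_one: "1 *\<^sub>C x = x"
    and mult_scaleC_left: "(r *\<^sub>C x) * y = r *\<^sub>C (x * y)"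
    and mult_scaleC_right: "x * (r *\<^sub>C y) = r *\<^sub>C (x * y)"

definition qint :: "complex \<Rightarrow> nat \<Rightarrow> complex" where
  "qint q n = (1 - q ^ n) / (1 - q)"

definition qfact :: "complex \<Rightarrow> nat \<Rightarrow> complex" where
  "qfact q n = (\<Prod>k = 1..n. qint q k)"

definition qeven_prod :: "complex \<Rightarrow> nat \<Rightarrow> complex" where
  "qeven_prod q \<beta> = (\<Prod>j = 1..\<beta>. qint q (2 * j))"

end

theory Submission
  imports Defs
begin

context complex_algebra_1 begin
lemma scaleC_zero_left[simp]: "0 *\<^sub>C x = 0"
proof -
  have "0 *\<^sub>C x = 0 *\<^sub>C x + 0 *\<^sub>C x" using scaleC_add_left[of 0 0 x] by simp
  thus ?thesis by simp
qed
lemma scaleC_zero_right[simp]: "r *\<^sub>C 0 = 0"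
proof -
  have "r *\<^sub>C 0 = r *\<^sub>C 0 + r *\<^sub>C 0" using scaleC_add_right[of r 0 0] by simp
  thus ?thesis by simp
qed
lemma scaleC_sum_left: "(\<Sum>i\<in>A. f i) *\<^sub>C x = (\<Sum>i\<in>A. f i *\<^sub>C x)"
  by (induction A rule: infinite_finite_induct) (auto simp: scaleC_add_left)
lemma scaleC_sum_right: "r *\<^sub>C (\<Sum>i\<in>A. f i) = (\<Sum>i\<in>A. r *\<^sub>C f i)"
  by (induction A rule: infinite_finite_induct) (auto simp: scaleC_add_right)
end

definition T :: "nat \<Rightarrow> (nat\<times>nat\<times>nat) set" where "T n = {(\<alpha>,\<beta>,\<gamma>). \<alpha> + 2*\<beta> + \<gamma> = n}"

lemma T_finite[simp]: "finite (T n)"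
  by (rule finite_subset[of _ "{0..n}\<times>{0..n}\<times>{0..n}"]) (auto simp: T_def)

lemma R1: fixes h :: "nat\<times>nat\<times>nat \<Rightarrow> 'b::comm_monoid_add"
  shows "(\<Sum>(\<alpha>,\<beta>,\<gamma>)\<in>T n. h (Suc \<alpha>,\<beta>,\<gamma>)) = (\<Sum>(\<alpha>,\<beta>,\<gamma>)\<in>T (Suc n). if \<alpha> > 0 then h (\<alpha>,\<beta>,\<gamma>) else 0)"
proof -
  have "(\<Sum>(\<alpha>,\<beta>,\<gamma>)\<in>T (Suc n). if \<alpha> > 0 then h (\<alpha>,\<beta>,\<gamma>) else 0)
      = (\<Sum>s\<in>{s\<in>T (Suc n). fst s > 0}. h s)"
    by (subst sum.inter_filter) (auto simp: case_prod_beta intro!: sum.cong)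
  also have "\<dots> = (\<Sum>(\<alpha>,\<beta>,\<gamma>)\<in>T n. h (Suc \<alpha>,\<beta>,\<gamma>))"
    by (rule sum.reindex_bij_witness[where j="\<lambda>(\<alpha>,\<beta>,\<gamma>). (\<alpha>-1,\<beta>,\<gamma>)" and i="\<lambda>(\<alpha>,\<beta>,\<gamma>). (Suc \<alpha>,\<beta>,\<gamma>)"])
       (auto simp: T_def)
  finally show ?thesis by simp
qed

lemma R2: fixes h :: "nat\<times>nat\<times>nat \<Rightarrow> 'b::comm_monoid_add"
  shows "(\<Sum>(\<alpha>,\<beta>,\<gamma>)\<in>T n. h (\<alpha>,\<beta>,Suc \<gamma>)) = (\<Sum>(\<alpha>,\<beta>,\<gamma>)\<in>T (Suc n). if \<gamma> > 0 then h (\<alpha>,\<beta>,\<gamma>) else 0)"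
proof -
  have "(\<Sum>(\<alpha>,\<beta>,\<gamma>)\<in>T (Suc n). if \<gamma> > 0 then h (\<alpha>,\<beta>,\<gamma>) else 0)
      = (\<Sum>s\<in>{s\<in>T (Suc n). snd (snd s) > 0}. h s)"
    by (subst sum.inter_filter) (auto simp: case_prod_beta intro!: sum.cong)
  also have "\<dots> = (\<Sum>(\<alpha>,\<beta>,\<gamma>)\<in>T n. h (\<alpha>,\<beta>,Suc \<gamma>))"
    by (rule sum.reindex_bij_witness[where j="\<lambda>(\<alpha>,\<beta>,\<gamma>). (\<alpha>,\<beta>,\<gamma>-1)" and i="\<lambda>(\<alpha>,\<beta>,\<gamma>). (\<alpha>,\<beta>,Suc \<gamma>)"])
       (auto simp: T_def)
  finally show ?thesis by simp
qed

lemma R3: fixes h :: "nat\<times>nat\<times>nat \<Rightarrow> 'b::comm_monoid_add"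
  shows "(\<Sum>(\<alpha>,\<beta>,\<gamma>)\<in>T n. if \<alpha> > 0 then h (\<alpha>-1,Suc \<beta>,\<gamma>) else 0) = (\<Sum>(\<alpha>,\<beta>,\<gamma>)\<in>T (Suc n). if \<beta> > 0 then h (\<alpha>,\<beta>,\<gamma>) else 0)"
proof -
  have "(\<Sum>(\<alpha>,\<beta>,\<gamma>)\<in>T (Suc n). if \<beta> > 0 then h (\<alpha>,\<beta>,\<gamma>) else 0)
      = (\<Sum>s\<in>{s\<in>T (Suc n). fst (snd s) > 0}. h s)"
    by (subst sum.inter_filter) (auto simp: case_prod_beta intro!: sum.cong)
  also have "\<dots> = (\<Sum>s\<in>{s\<in>T n. fst s > 0}. h (fst s - 1, Suc (fst (snd s)), snd (snd s)))"
    by (rule sum.reindex_bij_witness[where j="\<lambda>(\<alpha>,\<beta>,\<gamma>). (Suc \<alpha>,\<beta>-1,\<gamma>)" and i="\<lambda>(\<alpha>,\<beta>,\<gamma>). (\<alpha>-1,Suc \<beta>,\<gamma>)"])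
       (auto simp: T_def)
  also have "\<dots> = (\<Sum>(\<alpha>,\<beta>,\<gamma>)\<in>T n. if \<alpha> > 0 then h (\<alpha>-1,Suc \<beta>,\<gamma>) else 0)"
    by (subst sum.inter_filter) (auto simp: case_prod_beta intro!: sum.cong)
  finally show ?thesis by simp
qed



lemma R1c: fixes h :: "nat \<Rightarrow> nat \<Rightarrow> nat \<Rightarrow> 'b::comm_monoid_add"
  shows "(\<Sum>(\<alpha>,\<beta>,\<gamma>)\<in>T n. h (Suc \<alpha>) \<beta> \<gamma>) = (\<Sum>(\<alpha>,\<beta>,\<gamma>)\<in>T (Suc n). if \<alpha> > 0 then h \<alpha> \<beta> \<gamma> else 0)"
  using R1[of "\<lambda>(\<alpha>,\<beta>,\<gamma>). h \<alpha> \<beta> \<gamma>" n] by (simp add: case_prod_beta cong: if_cong)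
lemma R2c: fixes h :: "nat \<Rightarrow> nat \<Rightarrow> nat \<Rightarrow> 'b::comm_monoid_add"
  shows "(\<Sum>(\<alpha>,\<beta>,\<gamma>)\<in>T n. h \<alpha> \<beta> (Suc \<gamma>)) = (\<Sum>(\<alpha>,\<beta>,\<gamma>)\<in>T (Suc n). if \<gamma> > 0 then h \<alpha> \<beta> \<gamma> else 0)"
  using R2[of "\<lambda>(\<alpha>,\<beta>,\<gamma>). h \<alpha> \<beta> \<gamma>" n] by (simp add: case_prod_beta cong: if_cong)
lemma R3c: fixes h :: "nat \<Rightarrow> nat \<Rightarrow> nat \<Rightarrow> 'b::comm_monoid_add"
  shows "(\<Sum>(\<alpha>,\<beta>,\<gamma>)\<in>T n. if \<alpha> > 0 then h (\<alpha>-1) (Suc \<beta>) \<gamma> else 0) = (\<Sum>(\<alpha>,\<beta>,\<gamma>)\<in>T (Suc n). if \<beta> > 0 then h \<alpha> \<beta> \<gamma> else 0)"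
  using R3[of "\<lambda>(\<alpha>,\<beta>,\<gamma>). h \<alpha> \<beta> \<gamma>" n] by (simp add: case_prod_beta cong: if_cong)

lemma qfact_Suc: "qfact q (Suc k) = qfact q k * qint q (Suc k)"
  by (simp add: qfact_def)
lemma qeven_Suc: "qeven_prod q (Suc k) = qeven_prod q k * qint q (2 * Suc k)"
  by (simp add: qeven_prod_def)
lemma qint_0[simp]: "qint q 0 = 0" by (simp add: qint_def)
lemma qint_sum3: "qint q \<alpha> + q^\<alpha> * qint q (2*\<beta>) + q^(\<alpha>+2*\<beta>) * qint q \<gamma> = qint q (\<alpha>+2*\<beta>+\<gamma>)"
  by (cases "q=1") (simp_all add: qint_def field_simps power_add)
lemma qint_rec: "q \<noteq> 1 \<Longrightarrow> 1 + q * qint q (Suc k) = qint q (Suc (Suc k))"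
  by (simp add: qint_def field_simps)

lemma qfact_nz: "\<forall>k\<in>{1..N}. qint q k \<noteq> 0 \<Longrightarrow> m \<le> N \<Longrightarrow> qfact q m \<noteq> 0"
  by (auto simp: qfact_def)
lemma qeven_nz: "\<forall>k\<in>{1..N}. qint q k \<noteq> 0 \<Longrightarrow> 2*m \<le> N \<Longrightarrow> qeven_prod q m \<noteq> 0"
  by (auto simp: qeven_prod_def)

definition K :: "complex \<Rightarrow> nat \<Rightarrow> nat \<Rightarrow> nat \<Rightarrow> nat \<Rightarrow> complex" where
  "K q n \<alpha> \<beta> \<gamma> = qfact q n / (qfact q \<alpha> * qfact q \<gamma> * qeven_prod q \<beta>)"

lemma coef:
  assumes s: "\<alpha> + 2*\<beta> + \<gamma> = Suc n" and nz: "\<forall>k\<in>{1..Suc n}. qint q k \<noteq> 0"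
  shows "(if \<alpha>>0 then K q n (\<alpha>-1) \<beta> \<gamma> else 0) + (if \<gamma>>0 then K q n \<alpha> \<beta> (\<gamma>-1) * q^(\<alpha>+2*\<beta>) else 0)
     + (if \<beta>>0 then K q n (Suc \<alpha>) (\<beta>-1) \<gamma> * q^\<alpha> * qint q (Suc \<alpha>) else 0) = K q (Suc n) \<alpha> \<beta> \<gamma>"
proof -
  define D where "D = qfact q \<alpha> * qfact q \<gamma> * qeven_prod q \<beta>"
  have fa: "qfact q \<alpha> \<noteq> 0" using qfact_nz[OF nz] s by simp
  have fg: "qfact q \<gamma> \<noteq> 0" using qfact_nz[OF nz] s by simp
  have fb: "qeven_prod q \<beta> \<noteq> 0" using qeven_nz[OF nz] s by simp
  have fn: "qfact q n \<noteq> 0" using qfact_nz[OF nz] s by simp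
  have t1: "(if \<alpha>>0 then K q n (\<alpha>-1) \<beta> \<gamma> else 0) = qfact q n * qint q \<alpha> / D"
  proof (cases \<alpha>)
    case (Suc a)
    have "qfact q a \<noteq> 0" using qfact_nz[OF nz] s Suc by simp
    moreover have "qint q \<alpha> \<noteq> 0" using nz s Suc by auto
    ultimately show ?thesis using Suc fg fb by (simp add: K_def D_def qfact_Suc field_simps)
  qed simp
  have t2: "(if \<gamma>>0 then K q n \<alpha> \<beta> (\<gamma>-1) * q^(\<alpha>+2*\<beta>) else 0) = q^(\<alpha>+2*\<beta>) * qfact q n * qint q \<gamma> / D"
  proof (cases \<gamma>)
    case (Suc a)
    have "qfact q a \<noteq> 0" using qfact_nz[OF nz] s Suc by simp
    moreover have "qint q \<gamma> \<noteq> 0" using nz s Suc by auto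
    ultimately show ?thesis using Suc fa fb by (simp add: K_def D_def qfact_Suc field_simps)
  qed simp
  have t3: "(if \<beta>>0 then K q n (Suc \<alpha>) (\<beta>-1) \<gamma> * q^\<alpha> * qint q (Suc \<alpha>) else 0) = q^\<alpha> * qfact q n * qint q (2*\<beta>) / D"
  proof (cases \<beta>)
    case (Suc a)
    have "qeven_prod q a \<noteq> 0" using qeven_nz[OF nz] s Suc by simp
    moreover have "qint q (Suc \<alpha>) \<noteq> 0" using nz s Suc by auto
    moreover have "qint q (2*\<beta>) \<noteq> 0" using nz s Suc by auto
    ultimately show ?thesis using Suc fa fg by (simp add: K_def D_def qfact_Suc qeven_Suc field_simps)
  qed simp
  have "qfact q n * qint q \<alpha> / D + q^(\<alpha>+2*\<beta>) * qfact q n * qint q \<gamma> / D + q^\<alpha> * qfact q n * qint q (2*\<beta>) / D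
      = qfact q n * (qint q \<alpha> + q^\<alpha> * qint q (2*\<beta>) + q^(\<alpha>+2*\<beta>) * qint q \<gamma>) / D"
    by (simp add: add_divide_distrib distrib_left mult_ac)
  also have "\<dots> = K q (Suc n) \<alpha> \<beta> \<gamma>"
    unfolding qint_sum3 s by (simp add: K_def D_def qfact_Suc)
  finally show ?thesis using t1 t2 t3 by simp
qed


lemma a_bpow:
  fixes a b c :: "'a::complex_algebra_1"
  assumes q1: "q \<noteq> 1" and ab: "a * b = q *\<^sub>C (b * a) + c" and cb: "c * b = (q ^ 2) *\<^sub>C (b * c)"
  shows "a * b^(Suc k) = q^(Suc k) *\<^sub>C (b^(Suc k) * a) + (q^k * qint q (Suc k)) *\<^sub>C (b^k * c)"
proof (induction k)
  case 0
  then show ?case using ab q1 by (simp add: qint_def scaleC_one)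
next
  case (Suc k)
  have "a * b^(Suc (Suc k)) = (a * b^(Suc k)) * b" by (simp only: power_Suc2[of b "Suc k"] mult.assoc)
  also have "\<dots> = q^(Suc k) *\<^sub>C (b^(Suc k) * (a * b)) + (q^k * qint q (Suc k)) *\<^sub>C (b^k * (c * b))"
    unfolding Suc by (simp add: distrib_right mult_scaleC_left mult.assoc)
  also have "\<dots> = q^(Suc (Suc k)) *\<^sub>C (b^(Suc (Suc k)) * a) + q^(Suc k) *\<^sub>C (b^(Suc k) * c)
       + (q^k * qint q (Suc k) * q^2) *\<^sub>C (b^(Suc k) * c)"
  proof -
    have e0: "b^(Suc k) * (b * a) = b^(Suc (Suc k)) * a"
      by (simp only: mult.assoc[symmetric] power_Suc2[of b "Suc k", symmetric])
    have e1: "b^(Suc k) * (a*b) = q *\<^sub>C (b^(Suc(Suc k)) * a) + b^(Suc k)*c"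
      unfolding ab by (simp only: distrib_left mult_scaleC_right e0)
    have e2: "b^k*(c*b) = q^2 *\<^sub>C (b^(Suc k)*c)"
      unfolding cb by (simp only: mult_scaleC_right mult.assoc[symmetric] power_Suc2[of b k, symmetric])
    have p: "q^(Suc (Suc k)) = q^k*(q*q)" by (simp add: mult_ac)
    show ?thesis unfolding e1 e2 by (simp only: scaleC_add_right scaleC_scaleC power_Suc2[of q "Suc k", symmetric] power_Suc2[of q k] mult.assoc) (simp only: p)
  qed
  also have "\<dots> = q^(Suc (Suc k)) *\<^sub>C (b^(Suc (Suc k)) * a) + (q^(Suc k) * qint q (Suc (Suc k))) *\<^sub>C (b^(Suc k) * c)"
  proof -
    have "q^(Suc k) + q^k * qint q (Suc k) * q^2 = q^(Suc k) * qint q (Suc (Suc k))"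
      using qint_rec[OF q1, of k, symmetric] by (simp add: power2_eq_square algebra_simps)
    thus ?thesis by (simp add: add.assoc scaleC_add_left[symmetric])
  qed
  finally show ?case .
qed

lemma a_cpow:
  fixes a b c :: "'a::complex_algebra_1"
  assumes ac: "a * c = (q ^ 2) *\<^sub>C (c * a)"
  shows "a * c^k = q^(2*k) *\<^sub>C (c^k * a)"
proof (induction k)
  case 0 then show ?case by (simp add: scaleC_one)
next
  case (Suc k)
  have "a * c^(Suc k) = (a * c) * c^k" by (simp add: mult.assoc)
  also have "\<dots> = q^2 *\<^sub>C (c * (a * c^k))" unfolding ac by (simp add: mult_scaleC_left mult.assoc)
  also have "\<dots> = q^(2*Suc k) *\<^sub>C (c^(Suc k) * a)" unfolding Suc
    by (simp add: mult_scaleC_right scaleC_scaleC mult.assoc power_add power_mult power2_eq_square)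
  finally show ?case .
qed

lemma a_mono:
  fixes a b c :: "'a::complex_algebra_1"
  assumes q1: "q \<noteq> 1" and ab: "a * b = q *\<^sub>C (b * a) + c" and cb: "c * b = (q ^ 2) *\<^sub>C (b * c)"
    and ac: "a * c = (q ^ 2) *\<^sub>C (c * a)"
  shows "a * (b^\<alpha> * c^\<beta> * a^\<gamma>) = q^(\<alpha>+2*\<beta>) *\<^sub>C (b^\<alpha> * c^\<beta> * a^(Suc \<gamma>))
     + (if \<alpha>>0 then (q^(\<alpha>-1) * qint q \<alpha>) *\<^sub>C (b^(\<alpha>-1) * c^(Suc \<beta>) * a^\<gamma>) else 0)"
proof (cases \<alpha>)
  case 0
  have "a * (c^\<beta> * a^\<gamma>) = (a * c^\<beta>) * a^\<gamma>" by (simp add: mult.assoc)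
  also have "\<dots> = q^(2*\<beta>) *\<^sub>C (c^\<beta> * a^(Suc \<gamma>))" unfolding a_cpow[OF ac]
    by (simp add: mult_scaleC_left mult.assoc)
  finally show ?thesis using 0 by simp
next
  case (Suc k)
  have "a * (b^\<alpha> * c^\<beta> * a^\<gamma>) = ((a * b^(Suc k)) * c^\<beta>) * a^\<gamma>" using Suc by (simp add: mult.assoc)
  also have "\<dots> = q^(Suc k) *\<^sub>C (b^(Suc k) * (a * c^\<beta>) * a^\<gamma>) + (q^k * qint q (Suc k)) *\<^sub>C (b^k * c * c^\<beta> * a^\<gamma>)"
    unfolding a_bpow[OF q1 ab cb] by (simp add: distrib_right mult_scaleC_left mult.assoc)
  also have "\<dots> = q^(\<alpha>+2*\<beta>) *\<^sub>C (b^\<alpha> * c^\<beta> * a^(Suc \<gamma>))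
     + (q^(\<alpha>-1) * qint q \<alpha>) *\<^sub>C (b^(\<alpha>-1) * c^(Suc \<beta>) * a^\<gamma>)"
    unfolding a_cpow[OF ac] using Suc
    by (simp add: mult_scaleC_left mult_scaleC_right scaleC_scaleC mult.assoc power_add)
  finally show ?thesis using Suc by simp
qed


lemma if_scaleC: "(if P then k else 0) *\<^sub>C (m::'a::complex_algebra_1) = (if P then k *\<^sub>C m else 0)"
  by simp

lemma main:
  fixes a b c :: "'a::complex_algebra_1"
  assumes q1: "q \<noteq> 1" and ab: "a * b = q *\<^sub>C (b * a) + c" and cb: "c * b = (q ^ 2) *\<^sub>C (b * c)"
    and ac: "a * c = (q ^ 2) *\<^sub>C (c * a)"
  shows "(\<forall>k\<in>{1..n}. qint q k \<noteq> 0) \<Longrightarrow>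
    (a+b)^n = (\<Sum>(\<alpha>,\<beta>,\<gamma>)\<in>T n. K q n \<alpha> \<beta> \<gamma> *\<^sub>C (b^\<alpha>*c^\<beta>*a^\<gamma>))"
proof (induction n)
  case 0
  have "T 0 = {(0,0,0)}" by (auto simp: T_def)
  then show ?case by (simp add: K_def qfact_def qeven_prod_def scaleC_one)
next
  case (Suc n)
  have nz: "\<forall>k\<in>{1..n}. qint q k \<noteq> 0" using Suc.prems by auto
  have pt: "(a+b) * (k *\<^sub>C (b^\<alpha>*c^\<beta>*a^\<gamma>)) =
      (k * q^(\<alpha>+2*\<beta>)) *\<^sub>C (b^\<alpha>*c^\<beta>*a^Suc \<gamma>)
    + (if \<alpha>>0 then (k * q^(\<alpha>-1)*qint q \<alpha>) *\<^sub>C (b^(\<alpha>-1)*c^Suc \<beta>*a^\<gamma>) else 0)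
    + k *\<^sub>C (b^Suc \<alpha> * c^\<beta>*a^\<gamma>)" for k \<alpha> \<beta> \<gamma>
  proof -
    have "(a+b) * (k *\<^sub>C (b^\<alpha>*c^\<beta>*a^\<gamma>)) = k *\<^sub>C (a * (b^\<alpha>*c^\<beta>*a^\<gamma>)) + k *\<^sub>C (b^Suc \<alpha> * c^\<beta>*a^\<gamma>)"
      by (simp add: distrib_right mult_scaleC_right mult.assoc scaleC_add_right)
    then show ?thesis unfolding a_mono[OF q1 ab cb ac]
      by (simp add: scaleC_add_right scaleC_scaleC mult.assoc)
  qed
  have "(a+b)^Suc n = (a+b) * (\<Sum>(\<alpha>,\<beta>,\<gamma>)\<in>T n. K q n \<alpha> \<beta> \<gamma> *\<^sub>C (b^\<alpha>*c^\<beta>*a^\<gamma>))"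
    using Suc.IH[OF nz] by simp
  also have "\<dots> = (\<Sum>(\<alpha>,\<beta>,\<gamma>)\<in>T n. (K q n \<alpha> \<beta> \<gamma> * q^(\<alpha>+2*\<beta>)) *\<^sub>C (b^\<alpha>*c^\<beta>*a^Suc \<gamma>))
     + (\<Sum>(\<alpha>,\<beta>,\<gamma>)\<in>T n. if \<alpha>>0 then (K q n \<alpha> \<beta> \<gamma> * q^(\<alpha>-1)*qint q \<alpha>) *\<^sub>C (b^(\<alpha>-1)*c^Suc \<beta>*a^\<gamma>) else 0)
     + (\<Sum>(\<alpha>,\<beta>,\<gamma>)\<in>T n. K q n \<alpha> \<beta> \<gamma> *\<^sub>C (b^Suc \<alpha> * c^\<beta>*a^\<gamma>))"
    unfolding sum_distrib_left sum.distrib[symmetric] by (rule sum.cong) (auto simp: pt)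
  also have "(\<Sum>(\<alpha>,\<beta>,\<gamma>)\<in>T n. (K q n \<alpha> \<beta> \<gamma> * q^(\<alpha>+2*\<beta>)) *\<^sub>C (b^\<alpha>*c^\<beta>*a^Suc \<gamma>))
     = (\<Sum>(\<alpha>,\<beta>,\<gamma>)\<in>T (Suc n). if \<gamma>>0 then (K q n \<alpha> \<beta> (\<gamma>-1) * q^(\<alpha>+2*\<beta>)) *\<^sub>C (b^\<alpha>*c^\<beta>*a^\<gamma>) else 0)"
    using R2c[of "\<lambda>\<alpha> \<beta> \<gamma>. (K q n \<alpha> \<beta> (\<gamma>-1) * q^(\<alpha>+2*\<beta>)) *\<^sub>C (b^\<alpha>*c^\<beta>*a^\<gamma>)" n]
    by simp
  also have "(\<Sum>(\<alpha>,\<beta>,\<gamma>)\<in>T n. if \<alpha>>0 then (K q n \<alpha> \<beta> \<gamma> * q^(\<alpha>-1)*qint q \<alpha>) *\<^sub>C (b^(\<alpha>-1)*c^Suc \<beta>*a^\<gamma>) else 0)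
     = (\<Sum>(\<alpha>,\<beta>,\<gamma>)\<in>T (Suc n). if \<beta>>0 then (K q n (Suc \<alpha>) (\<beta>-1) \<gamma> * q^\<alpha>*qint q (Suc \<alpha>)) *\<^sub>C (b^\<alpha>*c^\<beta>*a^\<gamma>) else 0)"
  proof -
    have "(\<Sum>(\<alpha>,\<beta>,\<gamma>)\<in>T n. if \<alpha>>0 then (K q n \<alpha> \<beta> \<gamma> * q^(\<alpha>-1)*qint q \<alpha>) *\<^sub>C (b^(\<alpha>-1)*c^Suc \<beta>*a^\<gamma>) else 0)
       = (\<Sum>(\<alpha>,\<beta>,\<gamma>)\<in>T n. if \<alpha>>0 then (\<lambda>\<alpha> \<beta> \<gamma>. (K q n (Suc \<alpha>) (\<beta>-1) \<gamma> * q^\<alpha>*qint q (Suc \<alpha>)) *\<^sub>C (b^\<alpha>*c^\<beta>*a^\<gamma>)) (\<alpha>-1) (Suc \<beta>) \<gamma> else 0)"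
      by (rule sum.cong) auto
    then show ?thesis using R3c[of "\<lambda>\<alpha> \<beta> \<gamma>. (K q n (Suc \<alpha>) (\<beta>-1) \<gamma> * q^\<alpha>*qint q (Suc \<alpha>)) *\<^sub>C (b^\<alpha>*c^\<beta>*a^\<gamma>)" n]
      by simp
  qed
  also have "(\<Sum>(\<alpha>,\<beta>,\<gamma>)\<in>T n. K q n \<alpha> \<beta> \<gamma> *\<^sub>C (b^Suc \<alpha> * c^\<beta>*a^\<gamma>))
     = (\<Sum>(\<alpha>,\<beta>,\<gamma>)\<in>T (Suc n). if \<alpha>>0 then K q n (\<alpha>-1) \<beta> \<gamma> *\<^sub>C (b^\<alpha>*c^\<beta>*a^\<gamma>) else 0)"
    using R1c[of "\<lambda>\<alpha> \<beta> \<gamma>. K q n (\<alpha>-1) \<beta> \<gamma> *\<^sub>C (b^\<alpha>*c^\<beta>*a^\<gamma>)" n]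
    by simp
  also have "(\<Sum>(\<alpha>,\<beta>,\<gamma>)\<in>T (Suc n). if \<gamma>>0 then (K q n \<alpha> \<beta> (\<gamma>-1) * q^(\<alpha>+2*\<beta>)) *\<^sub>C (b^\<alpha>*c^\<beta>*a^\<gamma>) else 0)
     + (\<Sum>(\<alpha>,\<beta>,\<gamma>)\<in>T (Suc n). if \<beta>>0 then (K q n (Suc \<alpha>) (\<beta>-1) \<gamma> * q^\<alpha>*qint q (Suc \<alpha>)) *\<^sub>C (b^\<alpha>*c^\<beta>*a^\<gamma>) else 0)
     + (\<Sum>(\<alpha>,\<beta>,\<gamma>)\<in>T (Suc n). if \<alpha>>0 then K q n (\<alpha>-1) \<beta> \<gamma> *\<^sub>C (b^\<alpha>*c^\<beta>*a^\<gamma>) else 0)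
     = (\<Sum>(\<alpha>,\<beta>,\<gamma>)\<in>T (Suc n). K q (Suc n) \<alpha> \<beta> \<gamma> *\<^sub>C (b^\<alpha>*c^\<beta>*a^\<gamma>))"
    unfolding sum.distrib[symmetric]
  proof (rule sum.cong)
    fix x assume "x \<in> T (Suc n)"
    then obtain \<alpha> \<beta> \<gamma> where x: "x = (\<alpha>,\<beta>,\<gamma>)" and s: "\<alpha> + 2*\<beta> + \<gamma> = Suc n" by (auto simp: T_def)
    have hc: "((if \<alpha>>0 then K q n (\<alpha>-1) \<beta> \<gamma> else 0) + (if \<gamma>>0 then K q n \<alpha> \<beta> (\<gamma>-1) * q^(\<alpha>+2*\<beta>) else 0)
     + (if \<beta>>0 then K q n (Suc \<alpha>) (\<beta>-1) \<gamma> * q^\<alpha> * qint q (Suc \<alpha>) else 0)) *\<^sub>C (b^\<alpha>*c^\<beta>*a^\<gamma>)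
       = K q (Suc n) \<alpha> \<beta> \<gamma> *\<^sub>C (b^\<alpha>*c^\<beta>*a^\<gamma>)"
      using coef[OF s Suc.prems] by simp
    show "(case x of (\<alpha>,\<beta>,\<gamma>) \<Rightarrow> if \<gamma>>0 then (K q n \<alpha> \<beta> (\<gamma>-1) * q^(\<alpha>+2*\<beta>)) *\<^sub>C (b^\<alpha>*c^\<beta>*a^\<gamma>) else 0)
     + (case x of (\<alpha>,\<beta>,\<gamma>) \<Rightarrow> if \<beta>>0 then (K q n (Suc \<alpha>) (\<beta>-1) \<gamma> * q^\<alpha>*qint q (Suc \<alpha>)) *\<^sub>C (b^\<alpha>*c^\<beta>*a^\<gamma>) else 0)
     + (case x of (\<alpha>,\<beta>,\<gamma>) \<Rightarrow> if \<alpha>>0 then K q n (\<alpha>-1) \<beta> \<gamma> *\<^sub>C (b^\<alpha>*c^\<beta>*a^\<gamma>) else 0)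
     = (case x of (\<alpha>,\<beta>,\<gamma>) \<Rightarrow> K q (Suc n) \<alpha> \<beta> \<gamma> *\<^sub>C (b^\<alpha>*c^\<beta>*a^\<gamma>))"
      unfolding x prod.case using hc[unfolded scaleC_add_left if_scaleC] by (simp only: add_ac)
  qed simp
  finally show ?case .
qed

theorem lemma1:
  fixes q :: complex and a b c :: "'a :: complex_algebra_1" and n :: nat
  assumes "q \<noteq> 0" and "q ^ 2 \<noteq> 1"
    and "a * b = q *\<^sub>C (b * a) + c"
    and "a * c = (q ^ 2) *\<^sub>C (c * a)"
    and "c * b = (q ^ 2) *\<^sub>C (b * c)"
    and "n \<ge> 1"
    and "\<forall>k \<in> {1..n}. qint q k \<noteq> 0"
  shows "(a + b) ^ n =
    (\<Sum>(\<alpha>, \<beta>, \<gamma>) \<in> {(\<alpha>, \<beta>, \<gamma>). (\<alpha>::nat) + 2 * \<beta> + \<gamma> = n}.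
       (qfact q n / (qfact q \<alpha> * qfact q \<gamma> * qeven_prod q \<beta>))
         *\<^sub>C (b ^ \<alpha> * c ^ \<beta> * a ^ \<gamma>))"
proof -
  have q1: "q \<noteq> 1" using assms(2) by auto
  have "(a+b)^n = (\<Sum>(\<alpha>,\<beta>,\<gamma>)\<in>T n. K q n \<alpha> \<beta> \<gamma> *\<^sub>C (b^\<alpha>*c^\<beta>*a^\<gamma>))"
    by (rule main[OF q1 assms(3) assms(5) assms(4) assms(7)])
  then show ?thesis by (simp add: T_def K_def)
qed

end
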